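(* InpRS achieves $\epsilon$-LDP and guarantees that $\| \mathcal{C}^\beta(t)- {\mathcal{C}^{\beta}(t^* )}\|_1 = \tilde{O}\Big(\frac{2^{(d+k)/2}}{\epsilon\sqrt{N}}\Big)$ with constant probability.
   Context: There are $N$ users; user $i$ holds a vector in $\{0,1\}^d$, represented as an indicator vector $t_i\in\{0,1\}^{2^d}$ with a single 1 at index $j_i$, and $t=\sum_{i=1}^N t_i/N$ is the full (normalized) distribution. A mechanism $F$ is $\epsilon$-LDP if for all pairs of such indicator inputs $t_i,t'_i$ and every output $R$, $\Pr[F(t_i)=R]\le e^{\epsilon}\Pr[F(t'_i)=R]$. For $\beta\in\{0,1\}^d$ with $k$ ones, the $k$-way marginal operator is $\mathcal{C}^\beta(t)[\gamma]=\sum_{\eta:\eta\wedge\beta=\gamma} t[\eta]$ for $\gamma$ ranging over the $2^k$ values with support inside $\beta$. The algorithm InpRS (parallel randomized response on input): each user $i$ perturbs its value $t_i[\ell]$ at every index $\ell\in[2^d]$ independently using randomized response with privacy parameter $\epsilon/2$ (report the true bit with probability $p_r=e^{\epsilon/2}/(1+e^{\epsilon/2})$, otherwise the flipped bit) and releases all pairs $\langle \ell, b^*_{i,\ell}\rangle$. The aggregator debiases each report to an unbiased estimate (observed fraction $F$ mapped to $(F+p_r-1)/(2p_r-1)$), averages over users to obtain a reconstructed distribution $t^*$, and answers marginal $\beta$ by $\mathcal{C}^\beta(t^* )$. $\tilde{O}$ suppresses factors logarithmic in $N,d,k,\epsilon$; the number of users is assumed large relative to the number of cells, i.e. $N$ at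 least (up to log factors) proportional to $2^d$, and $\epsilon$ is bounded by a constant (the proof uses $0<\epsilon<2$). *)

theory Defs
  imports "HOL-Probability.Probability"
begin

(* A value in {0,1}^d is encoded by its support set eta \<subseteq> {..<d};
   the 2^d cells of the indicator vector are indexed by Pow {..<d}. *)

definition rr_prob :: "real \<Rightarrow> real" where
  "rr_prob e = exp e / (1 + exp e)"

definition rand_resp :: "real \<Rightarrow> bool \<Rightarrow> bool pmf" where
  "rand_resp e b = map_pmf (\<lambda>c. if c then b else \<not> b) (bernoulli_pmf (rr_prob e))"

(* InpRS local randomizer: the user holding cell v perturbs every coordinate t_i[l]
   (the indicator bit [l = v]) independently with RR at parameter eps/2;
   the output assigns to each cell l its reported bit. *)
definition inprs_local :: "nat \<Rightarrow> real \<Rightarrow> nat set \<Rightarrow> (nat set \<Rightarrow> bool) pmf" where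
  "inprs_local d eps v = Pi_pmf (Pow {..<d}) False (\<lambda>l. rand_resp (eps / 2) (l = v))"

definition eps_LDP :: "real \<Rightarrow> 'a set \<Rightarrow> ('a \<Rightarrow> 'b pmf) \<Rightarrow> bool" where
  "eps_LDP eps D M \<longleftrightarrow> (\<forall>u\<in>D. \<forall>v\<in>D. \<forall>R. pmf (M u) R \<le> exp eps * pmf (M v) R)"

definition full_dist :: "nat \<Rightarrow> (nat \<Rightarrow> nat set) \<Rightarrow> nat set \<Rightarrow> real" where
  "full_dist N x eta = real (card {i. i < N \<and> x i = eta}) / real N"

definition inprs_reports :: "nat \<Rightarrow> real \<Rightarrow> nat \<Rightarrow> (nat \<Rightarrow> nat set) \<Rightarrow> (nat \<Rightarrow> nat set \<Rightarrow> bool) pmf" where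
  "inprs_reports d eps N x = Pi_pmf {..<N} (\<lambda>_. False) (\<lambda>i. inprs_local d eps (x i))"

(* aggregator: debiased average of the reports, the reconstructed distribution t^* *)
definition inprs_recon :: "real \<Rightarrow> nat \<Rightarrow> (nat \<Rightarrow> nat set \<Rightarrow> bool) \<Rightarrow> nat set \<Rightarrow> real" where
  "inprs_recon eps N R l =
     (let p = rr_prob (eps / 2); F = real (card {i. i < N \<and> R i l}) / real N
      in (F + p - 1) / (2 * p - 1))"

definition marginal :: "nat \<Rightarrow> nat set \<Rightarrow> (nat set \<Rightarrow> real) \<Rightarrow> nat set \<Rightarrow> real" where
  "marginal d beta t gamma = (\<Sum>eta \<in> {eta \<in> Pow {..<d}. eta \<inter> beta = gamma}. t eta)"

definition marg_l1 :: "nat set \<Rightarrow> (nat set \<Rightarrow> real) \<Rightarrow> (nat set \<Rightarrow> real) \<Rightarrow> real" where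
  "marg_l1 beta f g = (\<Sum>gamma \<in> Pow beta. \<bar>f gamma - g gamma\<bar>)"

(* polylogarithmic slack factor allowed by O-tilde *)
definition logfac :: "nat \<Rightarrow> nat \<Rightarrow> nat \<Rightarrow> real \<Rightarrow> real" where
  "logfac N d k eps = ln (3 + real N + real d + real k + 1 / eps)"

end

theory Submission
  imports Defs
begin


lemma rr_prob_bounds: "0 < rr_prob e" "rr_prob e < 1"
  unfolding rr_prob_def by (auto simp: field_simps add_pos_pos)

lemma pmf_rand_resp: "pmf (rand_resp e b) c = (if c = b then rr_prob e else 1 - rr_prob e)"
proof -
  define f where "f = (\<lambda>c'. if c' then b else \<not> b)"
  have inj: "inj f" unfolding f_def by (auto simp: inj_def split: if_splits)
  have e: "f (c = b) = c" unfolding f_def by auto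
  have "pmf (rand_resp e b) c = pmf (map_pmf f (bernoulli_pmf (rr_prob e))) (f (c = b))"
    unfolding rand_resp_def f_def[symmetric] e ..
  also have "\<dots> = pmf (bernoulli_pmf (rr_prob e)) (c = b)" by (rule pmf_map_inj'[OF inj])
  finally show ?thesis using rr_prob_bounds[of e] by (cases "c = b") auto
qed

lemma rr_ratio: "rr_prob e = exp e * (1 - rr_prob e)"
proof -
  have h: "1 + exp e \<noteq> 0" by (smt (verit) exp_gt_zero)
  show ?thesis unfolding rr_prob_def using h by (simp add: field_simps)
qed

lemma rr_factor:
  assumes "e \<ge> 0"
  shows "pmf (rand_resp e b) c \<le> exp e * pmf (rand_resp e b') c"
proof -
  have "1 * (1 - rr_prob e) \<le> exp e * (1 - rr_prob e)"
    using rr_prob_bounds[of e] assms by (intro mult_right_mono) auto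
  hence q: "1 - rr_prob e \<le> rr_prob e" using rr_ratio[of e] by simp
  have "pmf (rand_resp e b) c \<le> rr_prob e" using q by (simp add: pmf_rand_resp)
  also have "\<dots> = exp e * (1 - rr_prob e)" by (rule rr_ratio)
  also have "\<dots> \<le> exp e * pmf (rand_resp e b') c" using q by (simp add: pmf_rand_resp)
  finally show ?thesis .
qed

lemma ldp_part: "eps > 0 \<Longrightarrow> eps_LDP eps (Pow {..<d}) (inprs_local d eps)"
  unfolding eps_LDP_def
proof (intro ballI allI)
  fix u v R assume eps: "eps > 0" and u: "u \<in> Pow {..<d}" and v: "v \<in> Pow {..<d}"
  let ?A = "Pow {..<d} :: nat set set"
  have fin: "finite ?A" by simp
  define c where "c l = exp (eps / 2 * of_bool (l \<in> {u, v}))" for l :: "nat set"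
  show "pmf (inprs_local d eps u) R \<le> exp eps * pmf (inprs_local d eps v) R"
  proof (cases "\<forall>x. x \<notin> ?A \<longrightarrow> R x = False")
    case False thus ?thesis unfolding inprs_local_def by (auto simp: pmf_Pi[OF fin])
  next
    case True
    have fac: "pmf (rand_resp (eps/2) (l = u)) (R l) \<le> c l * pmf (rand_resp (eps/2) (l = v)) (R l)" for l
    proof (cases "l \<in> {u, v}")
      case True thus ?thesis using rr_factor[of "eps/2"] eps by (simp add: c_def)
    next
      case False thus ?thesis by (simp add: c_def)
    qed
    define P where "P = (\<Prod>l\<in>?A. pmf (rand_resp (eps/2) (l = v)) (R l))"
    have P0: "P \<ge> 0" unfolding P_def by (intro prod_nonneg) auto
    have sum_le: "(\<Sum>l\<in>?A. eps / 2 * of_bool (l \<in> {u, v})) \<le> eps"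
    proof -
      have "(\<Sum>l\<in>?A. eps / 2 * of_bool (l \<in> {u, v})) = (\<Sum>l\<in>?A \<inter> {u,v}. eps / 2)"
        by (subst sum.inter_restrict) (auto intro!: sum.cong simp: indicator_def)
      also have "\<dots> = eps / 2 * card (?A \<inter> {u,v})" by simp
      finally have e1: "(\<Sum>l\<in>?A. eps / 2 * of_bool (l \<in> {u, v})) = eps / 2 * card (?A \<inter> {u,v})" .
      have "card (?A \<inter> {u,v}) \<le> card {u,v}" by (rule card_mono) auto
      also have "card {u,v} \<le> 2" by (cases "u = v") auto
      finally have "real (card (?A \<inter> {u,v})) \<le> 2" by simp
      hence "eps / 2 * card (?A \<inter> {u,v}) \<le> eps / 2 * 2" using eps by (intro mult_left_mono) auto
      thus ?thesis using e1 by simp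
    qed
    have "(\<Prod>l\<in>?A. pmf (rand_resp (eps/2) (l = u)) (R l)) \<le> (\<Prod>l\<in>?A. c l * pmf (rand_resp (eps/2) (l = v)) (R l))"
      by (intro prod_mono conjI fac) simp
    also have "\<dots> = (\<Prod>l\<in>?A. c l) * P"
      unfolding P_def by (rule prod.distrib)
    also have "(\<Prod>l\<in>?A. c l) = exp (\<Sum>l\<in>?A. eps / 2 * of_bool (l \<in> {u, v}))"
      unfolding c_def by (simp add: exp_sum fin)
    also have "exp (\<Sum>l\<in>?A. eps / 2 * of_bool (l \<in> {u, v})) * P \<le> exp eps * P"
      using sum_le P0 by (intro mult_right_mono) auto
    finally have "(\<Prod>l\<in>?A. pmf (rand_resp (eps/2) (l = u)) (R l)) \<le> exp eps * P" .
    thus ?thesis unfolding inprs_local_def using True by (simp add: pmf_Pi[OF fin] P_def)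
  qed
qed



lemma finite_set_Pi_pmf:
  assumes "finite A" "\<And>x. x \<in> A \<Longrightarrow> finite (set_pmf (p x))"
  shows "finite (set_pmf (Pi_pmf A dflt p))"
  using assms by (subst set_Pi_pmf) (auto intro!: finite_PiE_dflt)

lemma pi_component_exp:
  fixes h :: "'b \<Rightarrow> real"
  assumes "finite A" "x \<in> A"
  shows "measure_pmf.expectation (Pi_pmf A dflt p) (\<lambda>y. h (y x)) = measure_pmf.expectation (p x) h"
proof -
  have "measure_pmf.expectation (Pi_pmf A dflt p) (\<lambda>y. h (y x)) =
        measure_pmf.expectation (map_pmf (\<lambda>y. y x) (Pi_pmf A dflt p)) h" by simp
  also have "map_pmf (\<lambda>y. y x) (Pi_pmf A dflt p) = p x" using assms by (simp add: Pi_pmf_component)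
  finally show ?thesis .
qed

lemma pi_cross:
  fixes g :: "'a \<Rightarrow> 'b \<Rightarrow> real"
  assumes fin: "finite A" and fs: "\<And>x. x \<in> A \<Longrightarrow> finite (set_pmf (p x))"
    and xz: "x \<in> A" "z \<in> A" "x \<noteq> z"
  shows "measure_pmf.expectation (Pi_pmf A dflt p) (\<lambda>y. g x (y x) * g z (y z)) =
         measure_pmf.expectation (p x) (g x) * measure_pmf.expectation (p z) (g z)"
proof -
  let ?M = "Pi_pmf A dflt p"
  have fM: "finite (set_pmf ?M)" by (rule finite_set_Pi_pmf[OF fin fs])
  have ind: "prob_space.indep_vars (measure_pmf ?M) (\<lambda>_. count_space UNIV) (\<lambda>x f. f x) {x, z}"
    using xz by (intro prob_space.indep_vars_subset[OF _ indep_vars_Pi_pmf[OF fin]]) (auto simp: measure_pmf.prob_space_axioms)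
  have ind2: "prob_space.indep_vars (measure_pmf ?M) (\<lambda>_. borel) (\<lambda>i f. g i (f i)) {x, z}"
    by (rule prob_space.indep_vars_compose2[OF _ ind]) (auto simp: measure_pmf.prob_space_axioms)
  have "measure_pmf.expectation ?M (\<lambda>y. \<Prod>i\<in>{x,z}. g i (y i)) = (\<Prod>i\<in>{x,z}. measure_pmf.expectation ?M (\<lambda>y. g i (y i)))"
    by (rule prob_space.indep_vars_lebesgue_integral[OF _ _ ind2])
       (auto simp: measure_pmf.prob_space_axioms intro: integrable_measure_pmf_finite[OF fM])
  thus ?thesis using xz fin by (simp add: pi_component_exp)
qed

lemma pi_sq:
  fixes g :: "'a \<Rightarrow> 'b \<Rightarrow> real"
  assumes fin: "finite A" and fs: "\<And>x. x \<in> A \<Longrightarrow> finite (set_pmf (p x))"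
    and z: "\<And>x. x \<in> A \<Longrightarrow> measure_pmf.expectation (p x) (g x) = 0"
  shows "measure_pmf.expectation (Pi_pmf A dflt p) (\<lambda>y. (\<Sum>x\<in>A. g x (y x))\<^sup>2) =
         (\<Sum>x\<in>A. measure_pmf.expectation (p x) (\<lambda>v. (g x v)\<^sup>2))"
proof -
  let ?M = "Pi_pmf A dflt p"
  have fM: "finite (set_pmf ?M)" by (rule finite_set_Pi_pmf[OF fin fs])
  note int = integrable_measure_pmf_finite[OF fM]
  have "(\<lambda>y. (\<Sum>x\<in>A. g x (y x))\<^sup>2) = (\<lambda>y. \<Sum>x\<in>A. \<Sum>w\<in>A. g x (y x) * g w (y w))"
    by (simp add: power2_eq_square sum_product)
  hence "measure_pmf.expectation ?M (\<lambda>y. (\<Sum>x\<in>A. g x (y x))\<^sup>2) =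
        (\<Sum>x\<in>A. \<Sum>w\<in>A. measure_pmf.expectation ?M (\<lambda>y. g x (y x) * g w (y w)))"
    by (simp add: Bochner_Integration.integral_sum int)
  also have "\<dots> = (\<Sum>x\<in>A. \<Sum>w\<in>A. if w = x then measure_pmf.expectation (p x) (\<lambda>v. (g x v)\<^sup>2) else 0)"
  proof (intro sum.cong refl)
    fix x w assume x: "x \<in> A" and w: "w \<in> A"
    show "measure_pmf.expectation ?M (\<lambda>y. g x (y x) * g w (y w)) =
          (if w = x then measure_pmf.expectation (p x) (\<lambda>v. (g x v)\<^sup>2) else 0)"
    proof (cases "w = x")
      case True thus ?thesis using pi_component_exp[OF fin x, where h="\<lambda>v. (g x v)\<^sup>2" and dflt=dflt and p=p]
        by (simp add: power2_eq_square)
    next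
      case False thus ?thesis using pi_cross[where p=p and g=g and dflt=dflt, OF fin fs x w] z[OF x] by simp
    qed
  qed
  also have "\<dots> = (\<Sum>x\<in>A. measure_pmf.expectation (p x) (\<lambda>v. (g x v)\<^sup>2))"
    using fin by (simp add: sum.delta)
  finally show ?thesis .
qed



definition mu :: "real \<Rightarrow> nat set \<Rightarrow> nat set \<Rightarrow> real" where
  "mu eps v l = (if l = v then rr_prob (eps/2) else 1 - rr_prob (eps/2))"

lemma rr_prob_bounds': "0 < rr_prob e" "rr_prob e < 1"
  unfolding rr_prob_def by (auto simp: field_simps add_pos_pos)

lemma pmf_rand_resp': "pmf (rand_resp e b) c = (if c = b then rr_prob e else 1 - rr_prob e)"
proof -
  define f where "f = (\<lambda>c'. if c' then b else \<not> b)"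
  have inj: "inj f" unfolding f_def by (auto simp: inj_def split: if_splits)
  have e: "f (c = b) = c" unfolding f_def by auto
  have "pmf (rand_resp e b) c = pmf (map_pmf f (bernoulli_pmf (rr_prob e))) (f (c = b))"
    unfolding rand_resp_def f_def[symmetric] e ..
  also have "\<dots> = pmf (bernoulli_pmf (rr_prob e)) (c = b)" by (rule pmf_map_inj'[OF inj])
  finally show ?thesis using rr_prob_bounds'[of e] by (cases "c = b") auto
qed

lemma alg_q: "(1 - q) * (1 - q) * q + q * q * (1 - q) = q * (1 - (q::real))"
  by (simp add: algebra_simps)

lemma alg_q3: "q * q * (1 - q) + (q - 1) * (q - 1) * q = q * (1 - (q::real))"
  by (simp add: algebra_simps)

lemma alg_q2: "q * q * (1 - q) + (1 - q) * (1 - q) * q = q * (1 - (q::real))"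
  by (simp add: algebra_simps)

lemma exp_bool: "measure_pmf.expectation (p :: bool pmf) f = f True * pmf p True + f False * pmf p False"
  by (subst integral_measure_pmf_real[of UNIV]) (auto simp: UNIV_bool)

lemma exp_rr_bit: "measure_pmf.expectation (rand_resp (eps/2) (l = v)) (\<lambda>b. of_bool b - mu eps v l) = 0"
  by (cases "l = v") (simp_all add: exp_bool pmf_rand_resp' mu_def algebra_simps)

lemma var_rr_bit: "measure_pmf.expectation (rand_resp (eps/2) (l = v)) (\<lambda>b. (of_bool b - mu eps v l)\<^sup>2)
   = rr_prob (eps/2) * (1 - rr_prob (eps/2))"
proof (cases "l = v")
  case True thus ?thesis by (simp add: exp_bool pmf_rand_resp' mu_def power2_eq_square alg_q alg_q2 alg_q3)
next
  case False thus ?thesis by (simp add: exp_bool pmf_rand_resp' mu_def power2_eq_square alg_q alg_q2 alg_q3)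
qed



lemma inner_zero:
  assumes "S \<subseteq> Pow {..<d}"
  shows "measure_pmf.expectation (inprs_local d eps v) (\<lambda>r. \<Sum>l\<in>S. (of_bool (r l) - mu eps v l)) = 0"
proof -
  let ?A = "Pow {..<d} :: nat set set"
  have fin: "finite ?A" by simp
  have fM: "finite (set_pmf (inprs_local d eps v))" unfolding inprs_local_def
    by (rule finite_set_Pi_pmf) auto
  have "measure_pmf.expectation (inprs_local d eps v) (\<lambda>r. \<Sum>l\<in>S. (of_bool (r l) - mu eps v l))
     = (\<Sum>l\<in>S. measure_pmf.expectation (inprs_local d eps v) (\<lambda>r. of_bool (r l) - mu eps v l))"
    by (rule Bochner_Integration.integral_sum) (rule integrable_measure_pmf_finite[OF fM])
  also have "\<dots> = (\<Sum>l\<in>S. 0)"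
  proof (intro sum.cong refl)
    fix l assume "l \<in> S" hence l: "l \<in> ?A" using assms by auto
    show "measure_pmf.expectation (inprs_local d eps v) (\<lambda>r. of_bool (r l) - mu eps v l) = 0"
      unfolding inprs_local_def
      by (subst pi_component_exp[OF fin l, where h="\<lambda>b. of_bool b - mu eps v l"]) (rule exp_rr_bit)
  qed
  finally show ?thesis by simp
qed

lemma inner_sq:
  assumes "S \<subseteq> Pow {..<d}"
  shows "measure_pmf.expectation (inprs_local d eps v) (\<lambda>r. (\<Sum>l\<in>S. (of_bool (r l) - mu eps v l))\<^sup>2)
       = card S * (rr_prob (eps/2) * (1 - rr_prob (eps/2)))"
proof -
  let ?A = "Pow {..<d} :: nat set set"
  have fin: "finite ?A" by simp
  define G where "G l b = (if l \<in> S then of_bool b - mu eps v l else 0)" for l b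
  have eq: "(\<Sum>l\<in>S. (of_bool (r l) - mu eps v l)) = (\<Sum>l\<in>?A. G l (r l))" for r :: "nat set \<Rightarrow> bool"
    unfolding G_def using assms fin by (simp add: sum.If_cases Int_absorb1)
  have "measure_pmf.expectation (inprs_local d eps v) (\<lambda>r. (\<Sum>l\<in>?A. G l (r l))\<^sup>2)
     = (\<Sum>l\<in>?A. measure_pmf.expectation (rand_resp (eps/2) (l = v)) (\<lambda>b. (G l b)\<^sup>2))"
    unfolding inprs_local_def
  proof (rule pi_sq[OF fin])
    fix l assume "l \<in> ?A"
    show "measure_pmf.expectation (rand_resp (eps/2) (l = v)) (G l) = 0"
      using exp_rr_bit[of eps l v] by (cases "l \<in> S") (simp_all add: G_def[abs_def])
  qed auto
  also have "\<dots> = (\<Sum>l\<in>?A. if l \<in> S then rr_prob (eps/2) * (1 - rr_prob (eps/2)) else 0)"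
    by (intro sum.cong refl) (simp add: G_def var_rr_bit)
  also have "\<dots> = card S * (rr_prob (eps/2) * (1 - rr_prob (eps/2)))"
    using assms fin by (simp add: sum.If_cases Int_absorb1)
  finally show ?thesis by (simp add: eq)
qed

lemma outer_sq:
  assumes "S \<subseteq> Pow {..<d}"
  shows "measure_pmf.expectation (inprs_reports d eps N x)
           (\<lambda>R. (\<Sum>i<N. \<Sum>l\<in>S. (of_bool (R i l) - mu eps (x i) l))\<^sup>2)
       = N * card S * (rr_prob (eps/2) * (1 - rr_prob (eps/2)))"
proof -
  have "measure_pmf.expectation (inprs_reports d eps N x)
           (\<lambda>R. (\<Sum>i<N. \<Sum>l\<in>S. (of_bool (R i l) - mu eps (x i) l))\<^sup>2)
      = (\<Sum>i<N. measure_pmf.expectation (inprs_local d eps (x i)) (\<lambda>r. (\<Sum>l\<in>S. (of_bool (r l) - mu eps (x i) l))\<^sup>2))"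
    unfolding inprs_reports_def
  proof (rule pi_sq[where g="\<lambda>i r. \<Sum>l\<in>S. (of_bool (r l) - mu eps (x i) l)"])
    fix i show "finite (set_pmf (inprs_local d eps (x i)))" unfolding inprs_local_def
      by (rule finite_set_Pi_pmf) auto
    show "measure_pmf.expectation (inprs_local d eps (x i)) (\<lambda>r. \<Sum>l\<in>S. (of_bool (r l) - mu eps (x i) l)) = 0"
      by (rule inner_zero[OF assms])
  qed auto
  also have "\<dots> = (\<Sum>i<N. card S * (rr_prob (eps/2) * (1 - rr_prob (eps/2))))"
    by (simp add: inner_sq[OF assms])
  finally show ?thesis by simp
qed



lemma recon_diff:
  assumes N: "N \<ge> 1" and eps: "eps > 0"
  shows "inprs_recon eps N R l - full_dist N x l =
         (\<Sum>i<N. of_bool (R i l) - mu eps (x i) l) / (real N * (2 * rr_prob (eps/2) - 1))"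
proof -
  define q where "q = rr_prob (eps/2)"
  have "exp 0 < exp (eps/2)" using eps by simp
  hence q1: "q > 1/2" unfolding q_def rr_prob_def by (simp add: field_simps add_pos_pos)
  define a where "a = (\<Sum>i<N. of_bool (R i l) :: real)"
  define c where "c = (\<Sum>i<N. of_bool (x i = l) :: real)"
  have ca: "real (card {i. i < N \<and> R i l}) = a"
  proof -
    have "{i. i < N \<and> R i l} = {..<N} \<inter> {i. R i l}" by auto
    thus ?thesis unfolding a_def by simp
  qed
  have cc: "real (card {i. i < N \<and> x i = l}) = c"
  proof -
    have "{i. i < N \<and> x i = l} = {..<N} \<inter> {i. x i = l}" by auto
    thus ?thesis unfolding c_def by simp
  qed
  have mu_eq: "mu eps (x i) l = (2*q - 1) * of_bool (x i = l) + (1 - q)" for i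
    unfolding mu_def q_def by auto
  have E2: "(\<Sum>i<N. of_bool (R i l) - mu eps (x i) l) = a - ((2*q - 1) * c + N * (1 - q))"
    unfolding a_def c_def mu_eq by (simp add: sum_subtractf sum.distrib sum_distrib_left)
  have E1: "inprs_recon eps N R l - full_dist N x l = (a / N + q - 1) / (2*q - 1) - c / N"
    unfolding inprs_recon_def full_dist_def Let_def q_def[symmetric] ca cc ..
  have nz: "2*q - 1 \<noteq> 0" "real N \<noteq> 0" using q1 N by auto
  show ?thesis unfolding q_def[symmetric] E1 E2 using nz by (simp add: field_simps)
qed

lemma marg_diff:
  assumes N: "N \<ge> 1" and eps: "eps > 0"
  shows "\<bar>marginal d beta (full_dist N x) gamma - marginal d beta (inprs_recon eps N R) gamma\<bar> =
         \<bar>\<Sum>i<N. \<Sum>l\<in>{eta \<in> Pow {..<d}. eta \<inter> beta = gamma}. (of_bool (R i l) - mu eps (x i) l)\<bar>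
           / (real N * (2 * rr_prob (eps/2) - 1))"
proof -
  define S where "S = {eta \<in> Pow {..<d}. eta \<inter> beta = gamma}"
  define K where "K = real N * (2 * rr_prob (eps/2) - 1)"
  have "exp 0 < exp (eps/2)" using eps by simp
  hence "rr_prob (eps/2) > 1/2" unfolding rr_prob_def by (simp add: field_simps add_pos_pos)
  hence K: "K > 0" unfolding K_def using N by simp
  have "marginal d beta (full_dist N x) gamma - marginal d beta (inprs_recon eps N R) gamma
      = - (\<Sum>l\<in>S. inprs_recon eps N R l - full_dist N x l)"
    unfolding marginal_def S_def[symmetric] by (simp add: sum_subtractf)
  also have "\<dots> = - (\<Sum>l\<in>S. (\<Sum>i<N. of_bool (R i l) - mu eps (x i) l) / K)"
    unfolding K_def by (simp add: recon_diff[OF N eps])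
  also have "\<dots> = - (\<Sum>i<N. \<Sum>l\<in>S. (of_bool (R i l) - mu eps (x i) l)) / K"
    by (simp add: sum_divide_distrib[symmetric] sum.swap[of _ S])
  finally show ?thesis unfolding S_def[symmetric] K_def[symmetric] using K by simp
qed

lemma abs_exp_bound:
  fixes M :: "'a pmf" and Z :: "'a \<Rightarrow> real"
  assumes fin: "finite (set_pmf M)" and U: "U > 0"
    and sq: "measure_pmf.expectation M (\<lambda>w. (Z w)\<^sup>2) \<le> U\<^sup>2"
  shows "measure_pmf.expectation M (\<lambda>w. \<bar>Z w\<bar>) \<le> U"
proof -
  note int = integrable_measure_pmf_finite[OF fin]
  have pt: "\<bar>Z w\<bar> \<le> ((Z w)\<^sup>2 / U + U) / 2" for w
  proof -
    have "0 \<le> (\<bar>Z w\<bar> - U)\<^sup>2" by simp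
    hence "2 * U * \<bar>Z w\<bar> \<le> (Z w)\<^sup>2 + U\<^sup>2" by (simp add: power2_eq_square algebra_simps)
    thus ?thesis using U by (simp add: field_simps power2_eq_square)
  qed
  have first: "measure_pmf.expectation M (\<lambda>w. \<bar>Z w\<bar>) \<le> measure_pmf.expectation M (\<lambda>w. ((Z w)\<^sup>2 / U + U) / 2)"
    by (intro integral_mono int pt)
  have eqA: "measure_pmf.expectation M (\<lambda>w. (Z w)\<^sup>2 / U + U) =
     measure_pmf.expectation M (\<lambda>w. (Z w)\<^sup>2 / U) + measure_pmf.expectation M (\<lambda>w. U)"
    by (rule Bochner_Integration.integral_add[OF int int])
  have eqB: "measure_pmf.expectation M (\<lambda>w. (Z w)\<^sup>2 / U) + measure_pmf.expectation M (\<lambda>w. U)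
      = measure_pmf.expectation M (\<lambda>w. (Z w)\<^sup>2) / U + U"
    by simp
  have "measure_pmf.expectation M (\<lambda>w. ((Z w)\<^sup>2 / U + U) / 2) = (measure_pmf.expectation M (\<lambda>w. (Z w)\<^sup>2) / U + U) / 2"
    using eqA eqB by simp
  also have "\<dots> \<le> (U\<^sup>2 / U + U) / 2" using sq U by (intro divide_right_mono add_right_mono divide_right_mono) auto
  also have "\<dots> = U" using U by (simp add: power2_eq_square)
  finally show ?thesis using first by linarith
qed

lemma finite_reports: "finite (set_pmf (inprs_reports d eps N x))"
  unfolding inprs_reports_def
  by (rule finite_set_Pi_pmf) (auto simp: inprs_local_def intro!: finite_set_Pi_pmf)

lemma card_S:
  assumes "gamma \<subseteq> beta" "beta \<subseteq> {..<d}"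
  shows "card {eta \<in> Pow {..<d}. eta \<inter> beta = gamma} \<le> 2 ^ (d - card beta)"
proof -
  have fb: "finite beta" using assms finite_subset by blast
  have "card {eta \<in> Pow {..<d}. eta \<inter> beta = gamma} \<le> card (Pow ({..<d} - beta))"
  proof (rule card_inj_on_le[where f="\<lambda>eta. eta - beta"])
    show "inj_on (\<lambda>eta. eta - beta) {eta \<in> Pow {..<d}. eta \<inter> beta = gamma}"
    proof (rule inj_onI)
      fix a b assume a: "a \<in> {eta \<in> Pow {..<d}. eta \<inter> beta = gamma}" and b: "b \<in> {eta \<in> Pow {..<d}. eta \<inter> beta = gamma}"
        and ab: "a - beta = b - beta"
      have "a = (a - beta) \<union> (a \<inter> beta)" by auto
      also have "\<dots> = (b - beta) \<union> (b \<inter> beta)" using a b ab by auto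
      also have "\<dots> = b" by auto
      finally show "a = b" .
    qed
  qed auto
  also have "\<dots> = 2 ^ (d - card beta)" using assms fb by (simp add: card_Pow card_Diff_subset)
  finally show ?thesis .
qed

lemma key_ineq:
  assumes "0 < eps" "eps < 2"
  shows "eps\<^sup>2 * (rr_prob (eps/2) * (1 - rr_prob (eps/2))) \<le> 16 * (2 * rr_prob (eps/2) - 1)\<^sup>2"
proof -
  define y where "y = exp (eps/2)"
  have y0: "y > 0" unfolding y_def by simp
  have y1: "y - 1 \<ge> eps / 2" unfolding y_def using exp_ge_add_one_self[of "eps/2"] by linarith
  have "y \<le> exp 1" unfolding y_def using assms by simp
  also have "exp 1 \<le> (4::real)" using exp_le by simp
  finally have y4: "y \<le> 4" .
  have q: "rr_prob (eps/2) = y / (1 + y)" unfolding rr_prob_def y_def ..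
  have "eps\<^sup>2 * y \<le> eps\<^sup>2 * 4" using y4 by (intro mult_left_mono) auto
  also have "\<dots> = 16 * (eps/2)\<^sup>2" by (simp add: power2_eq_square)
  also have "\<dots> \<le> 16 * (y - 1)\<^sup>2" using y1 assms by (intro mult_left_mono power_mono) auto
  finally have main: "eps\<^sup>2 * y \<le> 16 * (y - 1)\<^sup>2" .
  have l: "eps\<^sup>2 * (rr_prob (eps/2) * (1 - rr_prob (eps/2))) = eps\<^sup>2 * y / (1 + y)\<^sup>2"
    unfolding q using y0 by (simp add: field_simps power2_eq_square)
  have r: "16 * (2 * rr_prob (eps/2) - 1)\<^sup>2 = 16 * (y - 1)\<^sup>2 / (1 + y)\<^sup>2"
    unfolding q using y0 by (simp add: field_simps power2_eq_square)
  show ?thesis unfolding l r using main y0 by (intro divide_right_mono) auto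
qed



lemma P_sq:
  assumes "k \<le> d"
  shows "(2 powr ((real d - real k) / 2))\<^sup>2 = 2 ^ (d - k)"
proof -
  have "(2 powr ((real d - real k) / 2))\<^sup>2 = 2 powr ((real d - real k) / 2) * 2 powr ((real d - real k) / 2)"
    by (simp add: power2_eq_square)
  also have "\<dots> = 2 powr (real (d - k))" using assms by (simp add: powr_add[symmetric] of_nat_diff)
  also have "\<dots> = 2 ^ (d - k)" by (simp add: powr_realpow)
  finally show ?thesis .
qed

lemma per_gamma:
  assumes N: "N \<ge> 1" and eps: "0 < eps" "eps < 2" and beta: "beta \<subseteq> {..<d}" and g: "gamma \<subseteq> beta"
  shows "measure_pmf.expectation (inprs_reports d eps N x)
     (\<lambda>R. \<bar>marginal d beta (full_dist N x) gamma - marginal d beta (inprs_recon eps N R) gamma\<bar>)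
     \<le> 4 * 2 powr ((real d - real (card beta)) / 2) / (eps * sqrt N)"
proof -
  define k where "k = card beta"
  have kd: "k \<le> d" unfolding k_def using card_mono[OF _ beta] by simp
  define q where "q = rr_prob (eps/2)"
  define s where "s = 2 * q - 1"
  define V where "V = q * (1 - q)"
  have "exp 0 < exp (eps/2)" using eps by simp
  hence "q > 1/2" unfolding q_def rr_prob_def by (simp add: field_simps add_pos_pos)
  hence s0: "s > 0" unfolding s_def by simp
  have V0: "V \<ge> 0" unfolding V_def q_def using rr_prob_bounds'[of "eps/2"] by simp
  define K where "K = real N * s"
  have K0: "K > 0" unfolding K_def using N s0 by simp
  define S where "S = {eta \<in> Pow {..<d}. eta \<inter> beta = gamma}"
  have SP: "S \<subseteq> Pow {..<d}" unfolding S_def by auto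
  define Z where "Z R = (\<Sum>i<N. \<Sum>l\<in>S. (of_bool (R i l) - mu eps (x i) l))" for R :: "nat \<Rightarrow> nat set \<Rightarrow> bool"
  define P where "P = 2 powr ((real d - real k) / 2)"
  have P0: "P > 0" unfolding P_def by simp
  define ub where "ub = 4 * P / (eps * sqrt N)"
  define U where "U = K * ub"
  have U0: "U > 0" unfolding U_def ub_def using K0 P0 eps N by simp
  have EZ: "measure_pmf.expectation (inprs_reports d eps N x) (\<lambda>R. (Z R)\<^sup>2) = N * card S * V"
    unfolding Z_def V_def q_def by (rule outer_sq[OF SP])
  have cS: "real (card S) \<le> 2 ^ (d - k)"
  proof -
    have "card S \<le> 2 ^ (d - k)" unfolding S_def k_def by (rule card_S[OF g beta])
    hence "real (card S) \<le> real (2 ^ (d - k))" by linarith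
    thus ?thesis by simp
  qed
  have Veps: "V * eps\<^sup>2 \<le> 16 * s\<^sup>2" using key_ineq[OF eps] unfolding V_def s_def q_def by (simp add: mult.commute)
  have U2: "U\<^sup>2 = 16 * N * s\<^sup>2 * 2 ^ (d - k) / eps\<^sup>2"
  proof -
    have "U\<^sup>2 = K\<^sup>2 * (16 * P\<^sup>2) / (eps\<^sup>2 * N)" unfolding U_def ub_def by (simp add: power_mult_distrib power_divide)
    also have "P\<^sup>2 = 2 ^ (d - k)" unfolding P_def by (rule P_sq[OF kd])
    finally show ?thesis unfolding K_def using N by (simp add: power2_eq_square field_simps)
  qed
  have "N * card S * V \<le> N * 2 ^ (d - k) * (16 * s\<^sup>2 / eps\<^sup>2)"
  proof (intro mult_mono)
    show "V \<le> 16 * s\<^sup>2 / eps\<^sup>2" using Veps eps by (simp add: field_simps)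
  qed (use cS V0 in \<open>auto intro!: mult_left_mono\<close>)
  also have "\<dots> = U\<^sup>2" unfolding U2 by simp
  finally have sq: "measure_pmf.expectation (inprs_reports d eps N x) (\<lambda>R. (Z R)\<^sup>2) \<le> U\<^sup>2" unfolding EZ .
  have absZ: "measure_pmf.expectation (inprs_reports d eps N x) (\<lambda>R. \<bar>Z R\<bar>) \<le> U"
    by (rule abs_exp_bound[OF finite_reports U0 sq])
  have eqf: "(\<lambda>R. \<bar>marginal d beta (full_dist N x) gamma - marginal d beta (inprs_recon eps N R) gamma\<bar>)
      = (\<lambda>R. \<bar>Z R\<bar> / K)"
    unfolding Z_def S_def K_def s_def q_def by (rule ext, rule marg_diff[OF N eps(1)])
  have "measure_pmf.expectation (inprs_reports d eps N x) (\<lambda>R. \<bar>Z R\<bar> / K)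
      = measure_pmf.expectation (inprs_reports d eps N x) (\<lambda>R. \<bar>Z R\<bar>) / K" by simp
  also have "\<dots> \<le> U / K" using absZ K0 by (intro divide_right_mono) auto
  also have "\<dots> = ub" unfolding U_def using K0 by simp
  finally show ?thesis unfolding eqf ub_def P_def k_def by simp
qed

lemma exp_l1:
  assumes N: "N \<ge> 1" and eps: "0 < eps" "eps < 2" and beta: "beta \<subseteq> {..<d}"
  shows "measure_pmf.expectation (inprs_reports d eps N x)
     (\<lambda>R. marg_l1 beta (marginal d beta (full_dist N x)) (marginal d beta (inprs_recon eps N R)))
     \<le> 4 * (2 powr ((real d + real (card beta)) / 2) / (eps * sqrt N))"
proof -
  have fb: "finite beta" using beta finite_subset by blast
  note int = integrable_measure_pmf_finite[OF finite_reports]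
  have "measure_pmf.expectation (inprs_reports d eps N x)
     (\<lambda>R. marg_l1 beta (marginal d beta (full_dist N x)) (marginal d beta (inprs_recon eps N R)))
   = (\<Sum>gamma\<in>Pow beta. measure_pmf.expectation (inprs_reports d eps N x)
     (\<lambda>R. \<bar>marginal d beta (full_dist N x) gamma - marginal d beta (inprs_recon eps N R) gamma\<bar>))"
    unfolding marg_l1_def by (rule Bochner_Integration.integral_sum[OF int])
  also have "\<dots> \<le> (\<Sum>gamma\<in>Pow beta. 4 * 2 powr ((real d - real (card beta)) / 2) / (eps * sqrt N))"
    by (intro sum_mono per_gamma[OF N eps beta]) auto
  also have "\<dots> = 2 ^ card beta * (4 * 2 powr ((real d - real (card beta)) / 2) / (eps * sqrt N))"
    using fb by (simp add: card_Pow)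
  also have "2 ^ card beta * (4 * 2 powr ((real d - real (card beta)) / 2) / (eps * sqrt N))
     = 4 * ((2 powr real (card beta) * 2 powr ((real d - real (card beta)) / 2)) / (eps * sqrt N))"
    by (simp add: powr_realpow)
  also have "2 powr real (card beta) * 2 powr ((real d - real (card beta)) / 2) = 2 powr ((real d + real (card beta)) / 2)"
    by (simp add: powr_add[symmetric] field_simps)
  finally show ?thesis .
qed



lemma markov_pmf:
  fixes M :: "'a pmf" and L :: "'a \<Rightarrow> real"
  assumes fin: "finite (set_pmf M)" and L0: "\<And>w. L w \<ge> 0" and B: "B > 0"
  shows "measure_pmf.prob M {w. L w \<le> B} \<ge> 1 - measure_pmf.expectation M L / B"
proof -
  note int = integrable_measure_pmf_finite[OF fin]
  have pt: "indicator {w. B < L w} w \<le> L w / B" for w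
    using L0[of w] B by (auto simp: indicator_def field_simps)
  have "measure_pmf.prob M {w. B < L w} = measure_pmf.expectation M (indicator {w. B < L w})" by simp
  also have "\<dots> \<le> measure_pmf.expectation M (\<lambda>w. L w / B)" by (intro integral_mono int pt)
  also have "\<dots> = measure_pmf.expectation M L / B" by simp
  finally have bad: "measure_pmf.prob M {w. B < L w} \<le> measure_pmf.expectation M L / B" .
  have "{w. L w \<le> B} = space (measure_pmf M) - {w. B < L w}" by auto
  hence "measure_pmf.prob M {w. L w \<le> B} = 1 - measure_pmf.prob M {w. B < L w}"
    using measure_pmf.prob_compl[of "{w. B < L w}" M] by simp
  thus ?thesis using bad by linarith
qed

lemma main_bound:
  assumes d0: "0 < delta" and N: "N \<ge> 1" and e0: "0 < eps" and e2: "eps < 2" and beta: "beta \<subseteq> {..<d}"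
  shows "measure_pmf.prob (inprs_reports d eps N x)
                {R. marg_l1 beta (marginal d beta (full_dist N x))
                                 (marginal d beta (inprs_recon eps N R))
                    \<le> 4 / delta * logfac N d (card beta) eps powr 0
                        * 2 powr ((real d + real (card beta)) / 2) / (eps * sqrt (real N))}
              \<ge> 1 - delta"
proof -
    define W where "W = 2 powr ((real d + real (card beta)) / 2) / (eps * sqrt (real N))"
    have W0: "W > 0" unfolding W_def using N e0 by simp
    have lf: "logfac N d (card beta) eps > 0" unfolding logfac_def
    proof (intro ln_gt_zero)
      have "0 < 1 / eps" using e0 by simp
      thus "1 < 3 + real N + real d + real (card beta) + 1 / eps" by linarith
    qed
    have B: "4 / delta * logfac N d (card beta) eps powr 0 * 2 powr ((real d + real (card beta)) / 2) / (eps * sqrt (real N))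
        = 4 / delta * W" unfolding W_def using lf by simp
    define L where "L R = marg_l1 beta (marginal d beta (full_dist N x)) (marginal d beta (inprs_recon eps N R))" for R
    have L0: "L R \<ge> 0" for R unfolding L_def marg_l1_def by (intro sum_nonneg) auto
    have EL: "measure_pmf.expectation (inprs_reports d eps N x) L \<le> 4 * W"
      unfolding L_def W_def by (rule exp_l1[OF N e0 e2 beta])
    have "measure_pmf.prob (inprs_reports d eps N x) {R. L R \<le> 4 / delta * W}
          \<ge> 1 - measure_pmf.expectation (inprs_reports d eps N x) L / (4 / delta * W)"
      by (rule markov_pmf[OF finite_reports L0]) (use W0 d0 in simp)
    moreover have "measure_pmf.expectation (inprs_reports d eps N x) L / (4 / delta * W) \<le> delta"
    proof -
      have "measure_pmf.expectation (inprs_reports d eps N x) L / (4 / delta * W) \<le> 4 * W / (4 / delta * W)"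
        using EL W0 d0 by (intro divide_right_mono) auto
      also have "\<dots> = delta" using W0 d0 by simp
      finally show ?thesis .
    qed
    ultimately show "measure_pmf.prob (inprs_reports d eps N x)
                {R. marg_l1 beta (marginal d beta (full_dist N x))
                                 (marginal d beta (inprs_recon eps N R))
                    \<le> 4 / delta * logfac N d (card beta) eps powr 0
                        * 2 powr ((real d + real (card beta)) / 2) / (eps * sqrt (real N))}
              \<ge> 1 - delta" unfolding B L_def[symmetric] by linarith
qed

theorem theorem2:
  shows "(\<forall>(d::nat) (eps::real). eps > 0 \<longrightarrow> eps_LDP eps (Pow {..<d}) (inprs_local d eps))
    \<and> (\<forall>(c0::real) (b::real) (delta::real). c0 > 0 \<longrightarrow> 0 < delta \<longrightarrow> delta < 1 \<longrightarrow>
         (\<exists>(C::real) (a::real). C > 0 \<and>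
           (\<forall>(N::nat) (d::nat) (beta::nat set) (eps::real) (x::nat \<Rightarrow> nat set).
              N \<ge> 1 \<longrightarrow> 0 < eps \<longrightarrow> eps < 2 \<longrightarrow> beta \<subseteq> {..<d} \<longrightarrow>
              (\<forall>i<N. x i \<subseteq> {..<d}) \<longrightarrow>
              real N * logfac N d (card beta) eps powr b \<ge> c0 * 2 ^ d \<longrightarrow>
              measure_pmf.prob (inprs_reports d eps N x)
                {R. marg_l1 beta (marginal d beta (full_dist N x))
                                 (marginal d beta (inprs_recon eps N R))
                    \<le> C * logfac N d (card beta) eps powr a
                        * 2 powr ((real d + real (card beta)) / 2) / (eps * sqrt (real N))}
              \<ge> 1 - delta)))"
proof (intro conjI allI impI)
  fix d :: nat and eps :: real assume "eps > 0"
  thus "eps_LDP eps (Pow {..<d}) (inprs_local d eps)" by (rule ldp_part)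
next
  fix c0 b delta :: real assume "c0 > 0" and d0: "0 < delta" and "delta < 1"
  show "\<exists>(C::real) (a::real). C > 0 \<and>
           (\<forall>(N::nat) (d::nat) (beta::nat set) (eps::real) (x::nat \<Rightarrow> nat set).
              N \<ge> 1 \<longrightarrow> 0 < eps \<longrightarrow> eps < 2 \<longrightarrow> beta \<subseteq> {..<d} \<longrightarrow>
              (\<forall>i<N. x i \<subseteq> {..<d}) \<longrightarrow>
              real N * logfac N d (card beta) eps powr b \<ge> c0 * 2 ^ d \<longrightarrow>
              measure_pmf.prob (inprs_reports d eps N x)
                {R. marg_l1 beta (marginal d beta (full_dist N x))
                                 (marginal d beta (inprs_recon eps N R))
                    \<le> C * logfac N d (card beta) eps powr a
                        * 2 powr ((real d + real (card beta)) / 2) / (eps * sqrt (real N))}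
              \<ge> 1 - delta)"
    apply (rule exI[of _ "4 / delta"], rule exI[of _ 0], intro conjI allI impI)
    using d0 apply simp
    apply (rule main_bound[OF d0]; assumption)
    done
qed

end
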